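(* The Perfect Split Heuristic $h$ is admissible on $\mathcal G_{\mathcal X,\mathcal Y}$: for every OR node $o$, $h(o)\le f(o)$, and for every AND node $a$, $h(a)\le f(a)$, where $f$ denotes the true value.
   Context: Let $x_1,\dots,x_N\in\{0,1\}^F$ be a binary dataset $\mathcal X$ with labels $\mathcal Y\in\{0,1\}^N$, $[N]=\{1,\dots,N\}$. For $\mathcal I\subseteq[N]$, $f\in[F]$, $k\in\{0,1\}$ let $\mathcal I|_{f=k}=\{i\in\mathcal I:(x_i)_f=k\}$, $c^k(\mathcal I)=|\{i\in\mathcal I:y_i=k\}|$, $\mathcal V(\mathcal I)=\{f:\mathcal I|_{f=0}\neq\emptyset\text{ and }\mathcal I|_{f=1}\neq\emptyset\}$. Fix $\rho^1,\rho^0>0$, $\alpha\in(0,1)$, $\beta\ge0$. Let $\ell_{\rm leaf}(c^1,c^0)=B(c^1+\rho^1,c^0+\rho^0)/B(\rho^1,\rho^0)$ ($B$ the Beta function), $p_{\rm split}(d)=\alpha(1+d)^{-\beta}$, $p_{\rm leaf}(d,\mathcal I)=1$ if $\mathcal V(\mathcal I)=\emptyset$ and $1-p_{\rm split}(d)$ otherwise, $p_{\rm inner}(d,\mathcal I)=0$ if $\mathcal V(\mathcal I)=\emptyset$ and $p_{\rm split}(d)/|\mathcal V(\mathcal I)|$ otherwise; $-\log0=+\infty$. $\mathcal G_{\mathcal X,\mathcal Y}$: for nonempty $\mathcal I\subseteq[N]$ and $d\in\{0,\dots,F\}$, an OR node $o_{\mathcal I,d}$ with a terminal child $t_{\mathcal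 I,d}$ via an edge of cost $-\log p_{\rm leaf}(d,\mathcal I)-\log\ell_{\rm leaf}(c^1(\mathcal I),c^0(\mathcal I))$; for $d<F$ and each $f\in\mathcal V(\mathcal I)$ an AND child $a_{\mathcal I,d,f}$ via an edge of cost $-\log p_{\rm inner}(d,\mathcal I)$, and $a_{\mathcal I,d,f}$ has cost-$0$ edges to $o_{\mathcal I|_{f=0},d+1}$ and $o_{\mathcal I|_{f=1},d+1}$; the root is $r=o_{[N],0}$ and only nodes reachable from $r$ are kept. A partial solution rooted at an OR node $u$ is a set $\mathcal S$ of nodes containing $u$, all reachable from $u$ inside $\mathcal S$, such that every AND node of $\mathcal S$ has both children in $\mathcal S$ and every OR node of $\mathcal S$ has exactly one child in $\mathcal S$; its cost is the sum of the costs of edges $v\to w$ with $v,w\in\mathcal S$. The true value $f(u)$ of an OR node $u$ is the minimum cost of a partial solution rooted at $u$; for an AND node $a$ with children $o_0,o_1$, $f(a)=f(o_0)+f(o_1)$. Perfect Split Heuristic: $h(t)=0$ for terminal nodes; $h(o_{\mathcal I,d})=-\max\{\log\ell_{\rm leaf}(c^1(\mathcal I),c^0(\mathcal I)),\ \log p_{\rm split}(d)+\log\ell_{\rm leaf}(c^1(\mathcal I),0)+\log\ell_{\rm leaf}(0,c^0(\mathcal I))\}$; $h(a_{\mathcal I,d,f})=h(o_{\mathcal I|_{f=0},d+1})+h(o_{\mathcal I|_{f=1},d+1})$. *)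

theory Defs
  imports "HOL-Analysis.Analysis"
begin

text \<open>Problem data: N samples indexed by 1..N, F binary features indexed by 1..F.
  xv i f = True iff (x_i)_f = 1; yv i = True iff y_i = 1. Labels/feature values
  k in {0,1} are encoded as booleans (False = 0, True = 1).\<close>

record dtprob =
  nS :: nat
  nF :: nat
  xv :: "nat \<Rightarrow> nat \<Rightarrow> bool"
  yv :: "nat \<Rightarrow> bool"
  rho1 :: real
  rho0 :: real
  alph :: real
  bet :: real

definition restr :: "dtprob \<Rightarrow> nat set \<Rightarrow> nat \<Rightarrow> bool \<Rightarrow> nat set" where
  "restr P I f k = {i \<in> I. xv P i f = k}"

definition cnt :: "dtprob \<Rightarrow> bool \<Rightarrow> nat set \<Rightarrow> nat" where
  "cnt P k I = card {i \<in> I. yv P i = k}"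

definition splitvars :: "dtprob \<Rightarrow> nat set \<Rightarrow> nat set" where
  "splitvars P I = {f \<in> {1..nF P}. restr P I f False \<noteq> {} \<and> restr P I f True \<noteq> {}}"

definition l_leaf :: "dtprob \<Rightarrow> nat \<Rightarrow> nat \<Rightarrow> real" where
  "l_leaf P c1 c0 = Beta (real c1 + rho1 P) (real c0 + rho0 P) / Beta (rho1 P) (rho0 P)"

definition p_split :: "dtprob \<Rightarrow> nat \<Rightarrow> real" where
  "p_split P d = alph P * (1 + real d) powr (- bet P)"

definition p_leaf :: "dtprob \<Rightarrow> nat \<Rightarrow> nat set \<Rightarrow> real" where
  "p_leaf P d I = (if splitvars P I = {} then 1 else 1 - p_split P d)"

definition p_inner :: "dtprob \<Rightarrow> nat \<Rightarrow> nat set \<Rightarrow> real" where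
  "p_inner P d I = (if splitvars P I = {} then 0 else p_split P d / real (card (splitvars P I)))"

datatype node = OrN "nat set" nat | TermN "nat set" nat | AndN "nat set" nat nat

definition raw_edges :: "dtprob \<Rightarrow> (node \<times> node) set" where
  "raw_edges P =
     {(OrN I d, TermN I d) | I d. I \<noteq> {} \<and> I \<subseteq> {1..nS P} \<and> d \<le> nF P}
   \<union> {(OrN I d, AndN I d f) | I d f. I \<noteq> {} \<and> I \<subseteq> {1..nS P} \<and> d < nF P \<and> f \<in> splitvars P I}
   \<union> {(AndN I d f, OrN (restr P I f k) (Suc d)) | I d f k.
        I \<noteq> {} \<and> I \<subseteq> {1..nS P} \<and> d < nF P \<and> f \<in> splitvars P I}"

definition root :: "dtprob \<Rightarrow> node" where
  "root P = OrN {1..nS P} 0"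

text \<open>Nodes of G: those reachable from the root (the root exists only if [N] is nonempty).\<close>
definition gnodes :: "dtprob \<Rightarrow> node set" where
  "gnodes P = {v. {1..nS P} \<noteq> {} \<and> (root P, v) \<in> (raw_edges P)\<^sup>*}"

definition gedges :: "dtprob \<Rightarrow> (node \<times> node) set" where
  "gedges P = {(v, w) \<in> raw_edges P. v \<in> gnodes P \<and> w \<in> gnodes P}"

fun is_or :: "node \<Rightarrow> bool" where
  "is_or (OrN _ _) = True" | "is_or _ = False"

fun is_and :: "node \<Rightarrow> bool" where
  "is_and (AndN _ _ _) = True" | "is_and _ = False"

fun ecost :: "dtprob \<Rightarrow> node \<Rightarrow> node \<Rightarrow> real" where
  "ecost P (OrN I d) (TermN _ _) =
     - ln (p_leaf P d I) - ln (l_leaf P (cnt P True I) (cnt P False I))"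
| "ecost P (OrN I d) (AndN _ _ _) = - ln (p_inner P d I)"
| "ecost P _ _ = 0"

definition partial_solution :: "dtprob \<Rightarrow> node \<Rightarrow> node set \<Rightarrow> bool" where
  "partial_solution P u S \<longleftrightarrow>
     S \<subseteq> gnodes P \<and> u \<in> S \<and>
     (\<forall>v\<in>S. (u, v) \<in> (gedges P \<inter> (S \<times> S))\<^sup>*) \<and>
     (\<forall>a\<in>S. is_and a \<longrightarrow> (\<forall>w. (a, w) \<in> gedges P \<longrightarrow> w \<in> S)) \<and>
     (\<forall>v\<in>S. is_or v \<longrightarrow> (\<exists>!w. (v, w) \<in> gedges P \<and> w \<in> S))"

definition sol_cost :: "dtprob \<Rightarrow> node set \<Rightarrow> real" where
  "sol_cost P S = (\<Sum>e \<in> gedges P \<inter> (S \<times> S). ecost P (fst e) (snd e))"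

definition fval_or :: "dtprob \<Rightarrow> node \<Rightarrow> real" where
  "fval_or P u = Min (sol_cost P ` {S. partial_solution P u S})"

fun fval :: "dtprob \<Rightarrow> node \<Rightarrow> real" where
  "fval P (OrN I d) = fval_or P (OrN I d)"
| "fval P (AndN I d f) =
     fval_or P (OrN (restr P I f False) (Suc d)) + fval_or P (OrN (restr P I f True) (Suc d))"
| "fval P (TermN _ _) = 0"

definition h_or :: "dtprob \<Rightarrow> nat set \<Rightarrow> nat \<Rightarrow> real" where
  "h_or P I d = - max (ln (l_leaf P (cnt P True I) (cnt P False I)))
                      (ln (p_split P d) + ln (l_leaf P (cnt P True I) 0) + ln (l_leaf P 0 (cnt P False I)))"

fun psh :: "dtprob \<Rightarrow> node \<Rightarrow> real" where
  "psh P (TermN _ _) = 0"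
| "psh P (OrN I d) = h_or P I d"
| "psh P (AndN I d f) = h_or P (restr P I f False) (Suc d) + h_or P (restr P I f True) (Suc d)"

end

theory Submission
  imports Defs
begin


lemma Beta_pos: "(x::real) > 0 \<Longrightarrow> y > 0 \<Longrightarrow> Beta x y > 0"
  by (simp add: Beta_def)

lemma Beta_rec: assumes "(x::real) > 0" "y > 0"
  shows "Beta (x + 1) y = x / (x + y) * Beta x y"
proof -
  have "x \<notin> \<int>\<^sub>\<le>\<^sub>0" using assms by auto
  from Beta_plus1_left[OF this, of y] assms show ?thesis by (simp add: field_simps)
qed

lemma Beta_dec: assumes "(x::real) > 0" "y > 0"
  shows "Beta (x + real n) y \<le> Beta x y"
proof (induction n)
  case 0 then show ?case by simp
next
  case (Suc n)
  have p: "x + real n > 0" using assms by simp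
  have "Beta (x + real (Suc n)) y = (x + real n) / (x + real n + y) * Beta (x + real n) y"
    using Beta_rec[OF p assms(2)] by (simp add: algebra_simps)
  also have "\<dots> \<le> Beta (x + real n) y"
    using p assms Beta_pos[OF p assms(2)] by (intro mult_left_le_one_le) auto
  finally show ?case using Suc by simp
qed

lemma Beta_split: assumes "(x::real) > 0" "y > 0" "r \<ge> 0"
  shows "Beta (x + r) (y + real b) * Beta x y \<le> Beta (x + r) y * Beta x (y + real b)"
proof (induction b)
  case 0 then show ?case by simp
next
  case (Suc b)
  have p: "y + real b > 0" using assms by simp
  have xr: "x + r > 0" using assms by simp
  have e1: "Beta (x + r) (y + real (Suc b)) = (y + real b) / (x + r + y + real b) * Beta (x + r) (y + real b)"
    using Beta_rec[OF p xr] by (simp add: Beta_commute add_ac)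
  have e2: "Beta x (y + real (Suc b)) = (y + real b) / (x + y + real b) * Beta x (y + real b)"
    using Beta_rec[OF p assms(1)] by (simp add: Beta_commute add_ac)
  have f: "(y + real b) / (x + r + y + real b) \<le> (y + real b) / (x + y + real b)"
    using assms p by (intro divide_left_mono) auto
  have "Beta (x + r) (y + real (Suc b)) * Beta x y
     = (y + real b) / (x + r + y + real b) * (Beta (x + r) (y + real b) * Beta x y)"
    using e1 by simp
  also have "\<dots> \<le> (y + real b) / (x + y + real b) * (Beta (x + r) y * Beta x (y + real b))"
    using mult_mono[OF f Suc.IH] p assms xr by (simp add: Beta_pos less_imp_le)
  also have "\<dots> = Beta (x + r) y * Beta x (y + real (Suc b))" using e2 by simp
  finally show ?case .
qed

lemma Beta_super: assumes "(x::real) > 0" "y > 0"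
  shows "Beta (x + real a) y * Beta (x + real a') y \<le> Beta (x + real (a + a')) y * Beta x y"
proof (induction a')
  case 0 then show ?case by simp
next
  case (Suc a')
  have p1: "x + real a' > 0" and p2: "x + real (a + a') > 0" using assms by auto
  have e1: "Beta (x + real (Suc a')) y = (x + real a') / (x + real a' + y) * Beta (x + real a') y"
    using Beta_rec[OF p1 assms(2)] by (simp add: add_ac)
  have e2: "Beta (x + real (a + Suc a')) y = (x + real (a + a')) / (x + real (a + a') + y) * Beta (x + real (a + a')) y"
    using Beta_rec[OF p2 assms(2)] by (simp add: add_ac)
  have f: "(x + real a') / (x + real a' + y) \<le> (x + real (a + a')) / (x + real (a + a') + y)"
    using assms p1 by (simp add: field_simps)
  have "Beta (x + real a) y * Beta (x + real (Suc a')) y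
      = (x + real a') / (x + real a' + y) * (Beta (x + real a) y * Beta (x + real a') y)"
    using e1 by simp
  also have "\<dots> \<le> (x + real (a + a')) / (x + real (a + a') + y) * (Beta (x + real (a + a')) y * Beta x y)"
    using mult_mono[OF f Suc.IH] p1 p2 assms by (simp add: Beta_pos less_imp_le)
  also have "\<dots> = Beta (x + real (a + Suc a')) y * Beta x y" using e2 by simp
  finally show ?case .
qed


locale dt =
  fixes P :: dtprob
  assumes r1: "rho1 P > 0" and r0: "rho0 P > 0" and a0: "0 < alph P" and a1: "alph P < 1"
    and b0: "bet P \<ge> 0"
begin

lemma psplit_pos: "p_split P d > 0"
  using a0 by (simp add: p_split_def)

lemma psplit_lt1: "p_split P d < 1"
proof -
  have "(1 + real d) powr (- bet P) \<le> 1"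
    using b0 by (smt (verit, ccfv_SIG) of_nat_0_le_iff powr_mono powr_zero_eq_one)
  then have "alph P * (1 + real d) powr (- bet P) \<le> alph P"
    using a0 by (simp add: mult_left_le_one_le)
  then show ?thesis using a1 by (simp add: p_split_def)
qed

lemma l_pos: "l_leaf P a b > 0"
  using r1 r0 by (simp add: l_leaf_def Beta_pos)

lemma l_le1: "l_leaf P a b \<le> 1"
proof -
  have "Beta (rho1 P + real a) (rho0 P + real b) \<le> Beta (rho1 P) (rho0 P + real b)"
    using Beta_dec[of "rho1 P" "rho0 P + real b" a] r1 r0 by simp
  also have "\<dots> = Beta (rho0 P + real b) (rho1 P)" by (rule Beta_commute)
  also have "\<dots> \<le> Beta (rho0 P) (rho1 P)"
    using Beta_dec[of "rho0 P" "rho1 P" b] r1 r0 by simp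
  also have "\<dots> = Beta (rho1 P) (rho0 P)" by (rule Beta_commute)
  finally show ?thesis using r1 r0 Beta_pos[of "rho1 P" "rho0 P"]
    by (simp add: l_leaf_def add.commute)
qed

lemma l_split: "l_leaf P a b \<le> l_leaf P a 0 * l_leaf P 0 b"
proof -
  define B0 where "B0 = Beta (rho1 P) (rho0 P)"
  have B0: "B0 > 0" using r1 r0 by (simp add: B0_def Beta_pos)
  have "Beta (rho1 P + real a) (rho0 P + real b) * B0
        \<le> Beta (rho1 P + real a) (rho0 P) * Beta (rho1 P) (rho0 P + real b)"
    using Beta_split[of "rho1 P" "rho0 P" "real a" b] r1 r0 unfolding B0_def by simp
  then have "Beta (real a + rho1 P) (real b + rho0 P) / B0
      \<le> (Beta (real a + rho1 P) (rho0 P) / B0) * (Beta (rho1 P) (real b + rho0 P) / B0)"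
    using B0 by (simp add: field_simps add.commute)
  then show ?thesis by (simp add: l_leaf_def B0_def)
qed

lemma l_super1: "l_leaf P a 0 * l_leaf P a' 0 \<le> l_leaf P (a + a') 0"
proof -
  define B0 where "B0 = Beta (rho1 P) (rho0 P)"
  have B0: "B0 > 0" using r1 r0 by (simp add: B0_def Beta_pos)
  have "Beta (rho1 P + real a) (rho0 P) * Beta (rho1 P + real a') (rho0 P)
        \<le> Beta (rho1 P + real (a + a')) (rho0 P) * B0"
    using Beta_super[of "rho1 P" "rho0 P" a a'] r1 r0 unfolding B0_def by simp
  then have "(Beta (real a + rho1 P) (rho0 P) / B0) * (Beta (real a' + rho1 P) (rho0 P) / B0)
      \<le> Beta (real (a + a') + rho1 P) (rho0 P) / B0"
    using B0 by (simp add: field_simps add.commute)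
  then show ?thesis by (simp add: l_leaf_def B0_def)
qed

lemma l_super0: "l_leaf P 0 b * l_leaf P 0 b' \<le> l_leaf P 0 (b + b')"
proof -
  define B0 where "B0 = Beta (rho1 P) (rho0 P)"
  have B0: "B0 > 0" using r1 r0 by (simp add: B0_def Beta_pos)
  have "Beta (rho0 P + real b) (rho1 P) * Beta (rho0 P + real b') (rho1 P)
        \<le> Beta (rho0 P + real (b + b')) (rho1 P) * Beta (rho0 P) (rho1 P)"
    using Beta_super[of "rho0 P" "rho1 P" b b'] r1 r0 by simp
  then have "Beta (rho1 P) (rho0 P + real b) * Beta (rho1 P) (rho0 P + real b')
        \<le> Beta (rho1 P) (rho0 P + real (b + b')) * B0"
    unfolding B0_def by (simp add: Beta_commute)
  then have "(Beta (rho1 P) (real b + rho0 P) / B0) * (Beta (rho1 P) (real b' + rho0 P) / B0)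
      \<le> Beta (rho1 P) (real (b + b') + rho0 P) / B0"
    using B0 by (simp add: field_simps add.commute)
  then show ?thesis by (simp add: l_leaf_def B0_def)
qed

end




fun good :: "dtprob \<Rightarrow> node \<Rightarrow> bool" where
  "good P (OrN I d) = (I \<noteq> {} \<and> I \<subseteq> {1..nS P} \<and> d \<le> nF P)"
| "good P (TermN I d) = (I \<noteq> {} \<and> I \<subseteq> {1..nS P} \<and> d \<le> nF P)"
| "good P (AndN I d f) = (I \<noteq> {} \<and> I \<subseteq> {1..nS P} \<and> d < nF P \<and> f \<in> splitvars P I)"

fun nset :: "node \<Rightarrow> nat set" where
  "nset (OrN I d) = I" | "nset (TermN I d) = I" | "nset (AndN I d f) = I"

fun ndep :: "node \<Rightarrow> nat" where
  "ndep (OrN I d) = d" | "ndep (TermN I d) = d" | "ndep (AndN I d f) = d"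

lemma restr_sub: "restr P I f k \<subseteq> I" by (auto simp: restr_def)

lemma restr_ne: "f \<in> splitvars P I \<Longrightarrow> restr P I f k \<noteq> {}"
  by (cases k) (auto simp: splitvars_def)

lemma raw_good: assumes "(v, w) \<in> raw_edges P" shows "good P w"
proof -
  have "(\<exists>I d. w = TermN I d \<and> I \<noteq> {} \<and> I \<subseteq> {1..nS P} \<and> d \<le> nF P)
      \<or> (\<exists>I d f. w = AndN I d f \<and> I \<noteq> {} \<and> I \<subseteq> {1..nS P} \<and> d < nF P \<and> f \<in> splitvars P I)
      \<or> (\<exists>I d f k. w = OrN (restr P I f k) (Suc d) \<and> I \<noteq> {} \<and> I \<subseteq> {1..nS P} \<and> d < nF P \<and> f \<in> splitvars P I)"
    using assms unfolding raw_edges_def by blast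
  then show ?thesis
  proof (elim disjE exE conjE)
    fix I d f k assume "w = OrN (restr P I f k) (Suc d)" "I \<subseteq> {1..nS P}" "d < nF P" "f \<in> splitvars P I"
    then show ?thesis using restr_ne[of f P I k] restr_sub[of P I f k] by auto
  qed auto
qed

lemma raw_mono: "(v, w) \<in> raw_edges P \<Longrightarrow> nset w \<subseteq> nset v \<and> ndep v \<le> ndep w"
  unfolding raw_edges_def by (auto simp: restr_def)

lemma gnodes_good: assumes "v \<in> gnodes P" shows "good P v"
proof -
  have ne: "{1..nS P} \<noteq> {}" and r: "(root P, v) \<in> (raw_edges P)\<^sup>*"
    using assms by (auto simp: gnodes_def)
  from r show ?thesis
  proof (cases rule: rtranclE)
    case base then show ?thesis using ne by (auto simp: root_def)
  next
    case (step y) then show ?thesis using raw_good by blast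
  qed
qed

lemma good_ne: "good P v \<Longrightarrow> nset v \<noteq> {}"
  by (cases v) auto

lemma gnodes_closed: "v \<in> gnodes P \<Longrightarrow> (v, w) \<in> raw_edges P \<Longrightarrow> w \<in> gnodes P"
  by (auto simp: gnodes_def)

lemma gedges_reach_mono: "(a, b) \<in> (gedges P)\<^sup>* \<Longrightarrow> nset b \<subseteq> nset a \<and> ndep a \<le> ndep b"
proof (induction rule: rtrancl_induct)
  case base then show ?case by simp
next
  case (step y z)
  then have "(y, z) \<in> raw_edges P" by (simp add: gedges_def)
  from raw_mono[OF this] step.IH show ?case by auto
qed

fun enc :: "node \<Rightarrow> nat set \<times> nat \<times> nat \<times> nat" where
  "enc (OrN I d) = (I, d, 0, 0)" | "enc (TermN I d) = (I, d, 0, 1)" | "enc (AndN I d f) = (I, d, f, 2)"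

lemma enc_inj: "inj enc"
proof (rule injI)
  fix x y :: node assume "enc x = enc y" then show "x = y"
    by (cases x; cases y) auto
qed

lemma finite_good: "finite {v. good P v}"
proof -
  have "enc ` {v. good P v} \<subseteq> Pow {1..nS P} \<times> {..nF P} \<times> {..nF P} \<times> {..2}"
  proof
    fix x assume "x \<in> enc ` {v. good P v}"
    then obtain v where "good P v" "x = enc v" by auto
    then show "x \<in> Pow {1..nS P} \<times> {..nF P} \<times> {..nF P} \<times> {..2}"
      by (cases v) (auto simp: splitvars_def)
  qed
  then have "finite (enc ` {v. good P v})" by (rule finite_subset) auto
  then show ?thesis using enc_inj by (meson finite_imageD inj_on_subset subset_UNIV)
qed

lemma finite_gnodes: "finite (gnodes P)"
  using finite_subset[OF _ finite_good[of P]] gnodes_good by blast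

lemma sub_solution:
  assumes ps: "partial_solution P u S" and v: "v \<in> S"
  shows "partial_solution P v {x \<in> S. (v, x) \<in> (gedges P \<inter> S \<times> S)\<^sup>*}"
proof -
  let ?R = "gedges P \<inter> S \<times> S"
  let ?S = "{x \<in> S. (v, x) \<in> ?R\<^sup>*}"
  have reach: "(v, x) \<in> (gedges P \<inter> ?S \<times> ?S)\<^sup>*" if "(v, x) \<in> ?R\<^sup>*" for x
    using that
  proof (induction rule: rtrancl_induct)
    case base then show ?case by simp
  next
    case (step y z)
    then have "y \<in> ?S" "z \<in> ?S" using v by (auto intro: rtrancl_into_rtrancl)
    then have "(y, z) \<in> gedges P \<inter> ?S \<times> ?S" using step.hyps(2) by blast
    then show ?case by (rule rtrancl_into_rtrancl[OF step.IH])
  qed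
  have c1: "?S \<subseteq> gnodes P" using ps by (auto simp: partial_solution_def)
  have c2: "v \<in> ?S" using v by simp
  have c3: "\<forall>x\<in>?S. (v, x) \<in> (gedges P \<inter> ?S \<times> ?S)\<^sup>*" using reach by simp
  have c4: "\<forall>a\<in>?S. is_and a \<longrightarrow> (\<forall>w. (a, w) \<in> gedges P \<longrightarrow> w \<in> ?S)"
  proof (intro ballI impI allI)
    fix a w assume that: "a \<in> ?S" "is_and a" "(a, w) \<in> gedges P"
    have "w \<in> S" using ps that unfolding partial_solution_def by blast
    then have "(a, w) \<in> ?R" using that by auto
    then have "(v, w) \<in> ?R\<^sup>*" using that(1) by (auto intro: rtrancl_into_rtrancl)
    then show "w \<in> ?S" using \<open>w \<in> S\<close> by simp
  qed
  have c5: "\<forall>x\<in>?S. is_or x \<longrightarrow> (\<exists>!w. (x, w) \<in> gedges P \<and> w \<in> ?S)"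
  proof (intro ballI impI)
    fix x assume that: "x \<in> ?S" "is_or x"
    then have "x \<in> S" by simp
    then have "\<exists>!w. (x, w) \<in> gedges P \<and> w \<in> S" using ps that(2) unfolding partial_solution_def by blast
    then obtain w where w: "(x, w) \<in> gedges P" "w \<in> S"
        and un: "\<And>w'. (x, w') \<in> gedges P \<and> w' \<in> S \<Longrightarrow> w' = w"
      by metis
    have "(x, w) \<in> ?R" using w \<open>x \<in> S\<close> by auto
    then have "(v, w) \<in> ?R\<^sup>*" using that(1) by (auto intro: rtrancl_into_rtrancl)
    then have "w \<in> ?S" using w by simp
    show "\<exists>!w. (x, w) \<in> gedges P \<and> w \<in> ?S"
    proof (rule ex1I[of _ w])
      show "(x, w) \<in> gedges P \<and> w \<in> ?S" using w \<open>w \<in> ?S\<close> by simp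
      fix w' assume "(x, w') \<in> gedges P \<and> w' \<in> ?S"
      then show "w' = w" using un by simp
    qed
  qed
  show ?thesis unfolding partial_solution_def using c1 c2 c3 c4 c5 by (intro conjI)
qed




context dt begin

lemma l_ne0: "l_leaf P a b \<noteq> 0" using l_pos[of a b] by simp

definition GG :: "nat set \<Rightarrow> real" where
  "GG I = - ln (l_leaf P (cnt P True I) 0) - ln (l_leaf P 0 (cnt P False I))"

lemma p_leaf_bnd: "0 < p_leaf P d I \<and> p_leaf P d I \<le> 1"
  using psplit_pos[of d] psplit_lt1[of d] by (simp add: p_leaf_def)

lemma p_inner_bnd: assumes "splitvars P I \<noteq> {}"
  shows "0 < p_inner P d I \<and> p_inner P d I \<le> p_split P d"
proof -
  have "finite (splitvars P I)" by (simp add: splitvars_def)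
  then have c: "card (splitvars P I) \<ge> 1" using assms by (simp add: Suc_le_eq card_gt_0_iff)
  have "p_split P d / real (card (splitvars P I)) \<le> p_split P d"
    using c psplit_pos[of d] by (simp add: divide_le_eq)
  moreover have "p_split P d / real (card (splitvars P I)) > 0"
    using c psplit_pos[of d] by simp
  ultimately show ?thesis using assms by (simp add: p_inner_def)
qed

lemma ln_le0: "0 < (x::real) \<Longrightarrow> x \<le> 1 \<Longrightarrow> ln x \<le> 0"
  by simp

lemma ecost_nonneg: assumes "(v, w) \<in> raw_edges P" shows "0 \<le> ecost P v w"
proof -
  have "(\<exists>I d. v = OrN I d \<and> w = TermN I d)
      \<or> (\<exists>I d f. v = OrN I d \<and> w = AndN I d f \<and> f \<in> splitvars P I)
      \<or> (\<exists>I d f k. v = AndN I d f \<and> w = OrN (restr P I f k) (Suc d))"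
    using assms unfolding raw_edges_def by blast
  then show ?thesis
  proof (elim disjE exE conjE)
    fix I d assume e: "v = OrN I d" "w = TermN I d"
    have "ln (p_leaf P d I) \<le> 0" using p_leaf_bnd[of d I] by simp
    moreover have "ln (l_leaf P (cnt P True I) (cnt P False I)) \<le> 0"
      using l_pos l_le1 by simp
    ultimately show ?thesis using e by simp
  next
    fix I d f assume e: "v = OrN I d" "w = AndN I d f" "f \<in> splitvars P I"
    then have "splitvars P I \<noteq> {}" by auto
    from p_inner_bnd[OF this, of d] psplit_lt1[of d]
    have "ln (p_inner P d I) \<le> 0" by simp
    then show ?thesis using e by simp
  qed auto
qed

lemma cnt_add: assumes "finite I"
  shows "cnt P k I = cnt P k (restr P I f False) + cnt P k (restr P I f True)"
proof -
  have "{i \<in> I. yv P i = k} = {i \<in> restr P I f False. yv P i = k} \<union> {i \<in> restr P I f True. yv P i = k}"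
    by (auto simp: restr_def)
  moreover have "{i \<in> restr P I f False. yv P i = k} \<inter> {i \<in> restr P I f True. yv P i = k} = {}"
    by (auto simp: restr_def)
  moreover have "finite {i \<in> restr P I f b. yv P i = k}" for b using assms by (simp add: restr_def)
  ultimately show ?thesis unfolding cnt_def by (simp add: card_Un_disjoint)
qed

lemma GG_super: assumes "finite I"
  shows "GG I \<le> GG (restr P I f False) + GG (restr P I f True)"
proof -
  let ?a0 = "cnt P True (restr P I f False)" and ?a1 = "cnt P True (restr P I f True)"
  let ?b0 = "cnt P False (restr P I f False)" and ?b1 = "cnt P False (restr P I f True)"
  have "ln (l_leaf P ?a0 0) + ln (l_leaf P ?a1 0) = ln (l_leaf P ?a0 0 * l_leaf P ?a1 0)"
    by (simp add: ln_mult l_ne0)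
  also have "\<dots> \<le> ln (l_leaf P (?a0 + ?a1) 0)"
    using l_super1 by (simp add: l_pos mult_pos_pos)
  finally have A: "ln (l_leaf P ?a0 0) + ln (l_leaf P ?a1 0) \<le> ln (l_leaf P (?a0 + ?a1) 0)" .
  have "ln (l_leaf P 0 ?b0) + ln (l_leaf P 0 ?b1) = ln (l_leaf P 0 ?b0 * l_leaf P 0 ?b1)"
    by (simp add: ln_mult l_ne0)
  also have "\<dots> \<le> ln (l_leaf P 0 (?b0 + ?b1))"
    using l_super0 by (simp add: l_pos mult_pos_pos)
  finally have B: "ln (l_leaf P 0 ?b0) + ln (l_leaf P 0 ?b1) \<le> ln (l_leaf P 0 (?b0 + ?b1))" .
  show ?thesis using A B cnt_add[OF assms, of True f] cnt_add[OF assms, of False f]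
    unfolding GG_def by simp
qed

lemma GG_leaf: "GG I \<le> - ln (l_leaf P (cnt P True I) (cnt P False I))"
proof -
  have "ln (l_leaf P (cnt P True I) (cnt P False I))
      \<le> ln (l_leaf P (cnt P True I) 0 * l_leaf P 0 (cnt P False I))"
    using l_split by (simp add: l_pos mult_pos_pos)
  then show ?thesis by (simp add: GG_def ln_mult l_ne0)
qed


lemma main:
  "partial_solution P (OrN I d) S \<Longrightarrow> GG I \<le> sol_cost P S \<and> h_or P I d \<le> sol_cost P S"
proof (induction "nF P - d" arbitrary: I d S rule: less_induct)
  case less
  let ?u = "OrN I d"
  note ps = less.prems
  have uS: "?u \<in> S" and Sg: "S \<subseteq> gnodes P" using ps by (auto simp: partial_solution_def)
  have finS: "finite S" using Sg finite_gnodes finite_subset by blast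
  have "good P ?u" using uS Sg gnodes_good by blast
  then have Ine: "I \<noteq> {}" and Isub: "I \<subseteq> {1..nS P}" and dF: "d \<le> nF P" by auto
  have finI: "finite I" using Isub finite_subset by blast
  have "\<exists>!w. (?u, w) \<in> gedges P \<and> w \<in> S" using ps uS unfolding partial_solution_def by auto
  then obtain w where uw: "(?u, w) \<in> gedges P" and wS: "w \<in> S" by blast
  let ?E = "gedges P \<inter> S \<times> S"
  let ?c = "\<lambda>e. ecost P (fst e) (snd e)"
  have finE: "finite ?E" using finS by (simp add: finite_Int)
  have nn: "\<And>e. e \<in> ?E \<Longrightarrow> 0 \<le> ?c e"
    using ecost_nonneg by (auto simp: gedges_def)
  have cost: "sol_cost P S = sum ?c ?E" by (simp add: sol_cost_def)
  have uwE: "(?u, w) \<in> ?E" using uw uS wS by simp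
  have single: "ecost P ?u w \<le> sol_cost P S"
    using member_le_sum[OF uwE, of ?c] nn finE cost by auto
  have raw: "(?u, w) \<in> raw_edges P" using uw by (simp add: gedges_def)
  then have "w = TermN I d \<or> (\<exists>f. w = AndN I d f \<and> d < nF P \<and> f \<in> splitvars P I)"
    unfolding raw_edges_def by blast
  then show ?case
  proof (elim disjE exE conjE)
    assume wT: "w = TermN I d"
    have "ln (p_leaf P d I) \<le> 0" using p_leaf_bnd[of d I] by simp
    then have A: "- ln (l_leaf P (cnt P True I) (cnt P False I)) \<le> sol_cost P S"
      using single wT by simp
    have "h_or P I d \<le> - ln (l_leaf P (cnt P True I) (cnt P False I))"
      unfolding h_or_def by simp
    then show ?thesis using A GG_leaf[of I] by linarith
  next
    fix f assume wA: "w = AndN I d f" and dlt: "d < nF P" and fV: "f \<in> splitvars P I"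
    define I0 where "I0 = restr P I f False"
    define I1 where "I1 = restr P I f True"
    define S0 where "S0 = {x \<in> S. (OrN I0 (Suc d), x) \<in> ?E\<^sup>*}"
    define S1 where "S1 = {x \<in> S. (OrN I1 (Suc d), x) \<in> ?E\<^sup>*}"
    have wg: "w \<in> gnodes P" using wS Sg by blast
    have child: "OrN (restr P I f k) (Suc d) \<in> S \<and> (w, OrN (restr P I f k) (Suc d)) \<in> gedges P" for k
    proof -
      have r: "(w, OrN (restr P I f k) (Suc d)) \<in> raw_edges P"
        unfolding raw_edges_def wA using Ine Isub dlt fV by blast
      then have "OrN (restr P I f k) (Suc d) \<in> gnodes P" using gnodes_closed wg by blast
      then have ge: "(w, OrN (restr P I f k) (Suc d)) \<in> gedges P" using r wg by (simp add: gedges_def)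
      then have "OrN (restr P I f k) (Suc d) \<in> S" using ps wS wA unfolding partial_solution_def by auto
      then show ?thesis using ge by simp
    qed
    have ps0: "partial_solution P (OrN I0 (Suc d)) S0"
      unfolding S0_def I0_def using sub_solution[OF ps] child by blast
    have ps1: "partial_solution P (OrN I1 (Suc d)) S1"
      unfolding S1_def I1_def using sub_solution[OF ps] child by blast
    have lt: "nF P - Suc d < nF P - d" using dlt by simp
    have IH0: "GG I0 \<le> sol_cost P S0 \<and> h_or P I0 (Suc d) \<le> sol_cost P S0"
      using less.hyps[OF lt ps0] by simp
    have IH1: "GG I1 \<le> sol_cost P S1 \<and> h_or P I1 (Suc d) \<le> sol_cost P S1"
      using less.hyps[OF lt ps1] by simp
    have Emono: "?E\<^sup>* \<subseteq> (gedges P)\<^sup>*" by (rule rtrancl_mono) blast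
    have in0: "nset x \<subseteq> I0 \<and> Suc d \<le> ndep x" if "x \<in> S0" for x
      using that gedges_reach_mono[of "OrN I0 (Suc d)" x P] Emono unfolding S0_def by auto
    have in1: "nset x \<subseteq> I1 \<and> Suc d \<le> ndep x" if "x \<in> S1" for x
      using that gedges_reach_mono[of "OrN I1 (Suc d)" x P] Emono unfolding S1_def by auto
    have S01: "S0 \<inter> S1 = {}"
    proof (rule ccontr)
      assume "S0 \<inter> S1 \<noteq> {}"
      then obtain x where x0: "x \<in> S0" and x1: "x \<in> S1" by blast
      have "nset x \<subseteq> I0 \<inter> I1" using in0[OF x0] in1[OF x1] by blast
      moreover have "I0 \<inter> I1 = {}" by (auto simp: I0_def I1_def restr_def)
      moreover have "x \<in> gnodes P" using x0 Sg unfolding S0_def by blast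
      ultimately show False using gnodes_good good_ne by blast
    qed
    have u0: "?u \<notin> S0" using in0 by fastforce
    have u1: "?u \<notin> S1" using in1 by fastforce
    let ?EA = "gedges P \<inter> S0 \<times> S0" and ?EB = "gedges P \<inter> S1 \<times> S1"
    have "S0 \<subseteq> S" "S1 \<subseteq> S" by (auto simp: S0_def S1_def)
    then have sub: "insert (?u, w) (?EA \<union> ?EB) \<subseteq> ?E" using uwE by blast
    have fin0: "finite ?EA" and fin1: "finite ?EB" using finite_subset[OF _ finE] sub by blast+
    have dis: "?EA \<inter> ?EB = {}" using S01 by blast
    have notin: "(?u, w) \<notin> ?EA \<union> ?EB" using u0 u1 by blast
    have eqs: "sum ?c (insert (?u, w) (?EA \<union> ?EB)) = ?c (?u, w) + (sum ?c ?EA + sum ?c ?EB)"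
      using fin0 fin1 dis notin by (simp add: sum.union_disjoint)
    have les: "sum ?c (insert (?u, w) (?EA \<union> ?EB)) \<le> sum ?c ?E"
      using sum_mono2[OF finE sub, of ?c] nn by blast
    have dec: "ecost P ?u w + sol_cost P S0 + sol_cost P S1 \<le> sol_cost P S"
      using eqs les cost unfolding sol_cost_def by simp
    have Vne: "splitvars P I \<noteq> {}" using fV by blast
    have ec: "ecost P ?u w = - ln (p_inner P d I)" using wA by simp
    have pi: "0 < p_inner P d I" "p_inner P d I \<le> p_split P d" using p_inner_bnd[OF Vne, of d] by auto
    have "ln (p_inner P d I) \<le> ln (p_split P d)" using pi psplit_pos[of d] by simp
    moreover have "ln (p_split P d) \<le> 0" using psplit_pos[of d] psplit_lt1[of d] by simp
    moreover have GGs: "GG I \<le> GG I0 + GG I1" unfolding I0_def I1_def by (rule GG_super[OF finI])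
    ultimately have c1: "GG I \<le> sol_cost P S" and c2: "- ln (p_split P d) + GG I \<le> sol_cost P S"
      using dec ec IH0 IH1 by linarith+
    have "h_or P I d \<le> - ln (p_split P d) + GG I" unfolding h_or_def GG_def by simp
    then show ?thesis using c1 c2 by linarith
  qed
qed

end


lemma or_bound:
  assumes "dt P" and ug: "u \<in> gnodes P" and uo: "is_or u"
  shows "psh P u \<le> fval P u"
proof -
  interpret dt P by (rule assms(1))
  obtain I d where u: "u = OrN I d" using uo by (cases u) auto
  have "good P u" using ug gnodes_good by blast
  then have Ine: "I \<noteq> {}" and Isub: "I \<subseteq> {1..nS P}" and dF: "d \<le> nF P" using u by auto
  let ?T = "TermN I d"
  have rT: "(u, ?T) \<in> raw_edges P" unfolding raw_edges_def u using Ine Isub dF by blast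
  then have Tg: "?T \<in> gnodes P" using gnodes_closed ug by blast
  have eT: "(u, ?T) \<in> gedges P" using rT Tg ug by (simp add: gedges_def)
  have nouu: "(u, u) \<notin> gedges P" unfolding gedges_def raw_edges_def u by auto
  have "partial_solution P u {u, ?T}"
    unfolding partial_solution_def
  proof (intro conjI)
    show "{u, ?T} \<subseteq> gnodes P" using ug Tg by simp
    show "u \<in> {u, ?T}" by simp
    show "\<forall>v\<in>{u, ?T}. (u, v) \<in> (gedges P \<inter> {u, ?T} \<times> {u, ?T})\<^sup>*"
      using eT by auto
    show "\<forall>a\<in>{u, ?T}. is_and a \<longrightarrow> (\<forall>w. (a, w) \<in> gedges P \<longrightarrow> w \<in> {u, ?T})"
      using u by auto
    show "\<forall>v\<in>{u, ?T}. is_or v \<longrightarrow> (\<exists>!w. (v, w) \<in> gedges P \<and> w \<in> {u, ?T})"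
    proof (intro ballI impI)
      fix v assume "v \<in> {u, ?T}" "is_or v"
      then have v: "v = u" by auto
      show "\<exists>!w. (v, w) \<in> gedges P \<and> w \<in> {u, ?T}"
        using eT nouu v by auto
    qed
  qed
  then have ne: "sol_cost P ` {S. partial_solution P u S} \<noteq> {}" by blast
  have "{S. partial_solution P u S} \<subseteq> Pow (gnodes P)" by (auto simp: partial_solution_def)
  then have "finite {S. partial_solution P u S}" using finite_gnodes finite_subset by blast
  then have fin: "finite (sol_cost P ` {S. partial_solution P u S})" by simp
  have "\<forall>x\<in>sol_cost P ` {S. partial_solution P u S}. h_or P I d \<le> x"
    using main u by auto
  then have "h_or P I d \<le> Min (sol_cost P ` {S. partial_solution P u S})"
    using fin ne by simp
  then show ?thesis using u by (simp add: fval_or_def)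
qed

theorem corollary15:
  fixes P :: dtprob
  assumes "rho1 P > 0" and "rho0 P > 0" and "0 < alph P" and "alph P < 1" and "bet P \<ge> 0"
  shows "(\<forall>u \<in> gnodes P. is_or u \<longrightarrow> psh P u \<le> fval P u)
       \<and> (\<forall>a \<in> gnodes P. is_and a \<longrightarrow> psh P a \<le> fval P a)"
proof -
  have D: "dt P" using assms by unfold_locales
  have OR: "\<forall>u \<in> gnodes P. is_or u \<longrightarrow> psh P u \<le> fval P u"
    using or_bound[OF D] by blast
  have AND: "\<forall>a \<in> gnodes P. is_and a \<longrightarrow> psh P a \<le> fval P a"
  proof (intro ballI impI)
    fix a assume ag: "a \<in> gnodes P" and ao: "is_and a"
    obtain I d f where a: "a = AndN I d f" using ao by (cases a) auto
    have "good P a" using ag gnodes_good by blast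
    then have Ine: "I \<noteq> {}" and Isub: "I \<subseteq> {1..nS P}" and dlt: "d < nF P"
      and fV: "f \<in> splitvars P I" using a by auto
    have cg: "OrN (restr P I f k) (Suc d) \<in> gnodes P" for k
    proof -
      have "(a, OrN (restr P I f k) (Suc d)) \<in> raw_edges P"
        unfolding raw_edges_def a using Ine Isub dlt fV by blast
      then show ?thesis using gnodes_closed ag by blast
    qed
    have b0: "psh P (OrN (restr P I f False) (Suc d)) \<le> fval P (OrN (restr P I f False) (Suc d))"
      using OR[rule_format, OF cg[of False]] by simp
    have b1: "psh P (OrN (restr P I f True) (Suc d)) \<le> fval P (OrN (restr P I f True) (Suc d))"
      using OR[rule_format, OF cg[of True]] by simp
    show "psh P a \<le> fval P a" using b0 b1 a by simp
  qed
  show ?thesis using OR AND by blast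
qed

end
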